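(* Let $\mathbf{a}_1,\mathbf{a}_2\in G$ with $\mathbf{a}_i\in G(t_i)$, where $t_i=\kappa_i+\kappa_i^{-1}$, $i=1,2$. (a) If $\mathbf{a}_1\mathbf{a}_2=\mathbf{d}(\lambda)$ with $\lambda\notin\{\pm1,\ \kappa_1\kappa_2,\ \kappa_1\kappa_2^{-1},\ \kappa_1^{-1}\kappa_2,\ \kappa_1^{-1}\kappa_2^{-1}\}$, then there exists $\mu\neq0$ such that $\mathbf{a}_1=\mathbf{h}^{\lambda}_{t_1,t_2}(-\lambda\mu)$ and $\mathbf{a}_2=\mathbf{h}^{\lambda}_{t_2,t_1}(\mu)$. (b) If $\mathbf{a}_1\mathbf{a}_2=\mathbf{d}(\kappa_1^{\epsilon_1}\kappa_2^{\epsilon_2})$ with $\epsilon_1,\epsilon_2\in\{\pm1\}$ and $\kappa_1^{\epsilon_1}\kappa_2^{\epsilon_2}\neq\pm1$, then either $\mathbf{a}_1=\mathbf{u}^+(\kappa_1^{\epsilon_1},-\kappa_1^{\epsilon_1}\alpha)$, $\mathbf{a}_2=\mathbf{u}^+(\kappa_2^{\epsilon_2},\kappa_2^{-\epsilon_2}\alpha)$ for some $\alpha\in\mathbb{C}$, or $\mathbf{a}_1=\mathbf{u}^-(\kappa_1^{\epsilon_1},-\kappa_1^{-\epsilon_1}\alpha)$, $\mathbf{a}_2=\mathbf{u}^-(\kappa_2^{\epsilon_2},\kappa_2^{\epsilon_2}\alpha)$ for some $\alpha\in\mathbb{C}$. (c) If $\mathbf{a}_1\mathbf{a}_2=-\mathbf{p}$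 and $t_1+t_2=0$, then $\mathbf{a}_1=\mathbf{u}^+(-\kappa_2^{-\epsilon},\xi)$ and $\mathbf{a}_2=\mathbf{u}^+(\kappa_2^{\epsilon},\xi+\kappa_2^{\epsilon})$ for some $\xi\in\mathbb{C}$ and $\epsilon\in\{\pm1\}$. (d) If $\mathbf{a}_1\mathbf{a}_2=-\mathbf{p}$ and $t_1+t_2\neq0$, then $\mathbf{a}_1=\mathbf{k}_{t_1,t_2}(\alpha+(t_1+t_2)/2)$ and $\mathbf{a}_2=\mathbf{k}_{t_2,t_1}(\alpha)$ for some $\alpha\in\mathbb{C}$. (e) Let $\tau=\mathrm{tr}(\mathbf{a}_1\mathbf{a}_2)$. Then the pair $(\mathbf{a}_1,\mathbf{a}_2)$ is reducible if and only if $\tau^2-t_1t_2\tau+t_1^2+t_2^2-4=0$.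
   Context: $G=\mathrm{SL}(2,\mathbb{C})$, $G(t)=\{\mathbf{x}\in G:\mathrm{tr}(\mathbf{x})=t\}$. A pair $(\mathbf{a},\mathbf{b})\in G\times G$ is reducible if $\mathbf{a},\mathbf{b}$ have a common eigenvector. Notation: $\mathbf{p}=\begin{pmatrix}1&1\\0&1\end{pmatrix}$, $\mathbf{d}(\lambda)=\begin{pmatrix}\lambda&0\\0&\lambda^{-1}\end{pmatrix}$, $\mathbf{u}^+(\kappa,\xi)=\begin{pmatrix}\kappa&\xi\\0&\kappa^{-1}\end{pmatrix}$, $\mathbf{u}^-(\kappa,\xi)=\begin{pmatrix}\kappa&0\\\xi&\kappa^{-1}\end{pmatrix}$. For $\lambda\neq\pm1$ and $\mu\neq0$, $\mathbf{h}^{\lambda}_{t_1,t_2}(\mu)=\frac{1}{\lambda-\lambda^{-1}}\begin{pmatrix}\lambda t_1-t_2&\mu\\ \delta\mu^{-1}& t_2-\lambda^{-1}t_1\end{pmatrix}$, where $\delta=(\lambda+\lambda^{-1})t_1t_2-t_1^2-t_2^2-(\lambda-\lambda^{-1})^2$ (symmetric in $t_1,t_2$). For $t_1+t_2\neq0$, $\mathbf{k}_{t_1,t_2}(\alpha)=\begin{pmatrix}\alpha+t_1/2&(t_1+t_2)^{-1}(t_1^2/4-1-\alpha^2)\\ t_1+t_2&-\alpha+t_1/2\end{pmatrix}$. *)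

theory Defs
  imports "HOL-Analysis.Analysis"
begin

definition mat2 :: "complex \<Rightarrow> complex \<Rightarrow> complex \<Rightarrow> complex \<Rightarrow> complex^2^2" where
  "mat2 a b c d = (\<chi> i j. if i = 1 then (if j = 1 then a else b) else (if j = 1 then c else d))"

definition SL2 :: "(complex^2^2) set" where
  "SL2 = {x. det x = 1}"

definition SL2_tr :: "complex \<Rightarrow> (complex^2^2) set" where
  "SL2_tr t = {x \<in> SL2. trace x = t}"

definition reducible_pair :: "complex^2^2 \<Rightarrow> complex^2^2 \<Rightarrow> bool" where
  "reducible_pair a b \<longleftrightarrow>
     (\<exists>v :: complex^2. v \<noteq> 0 \<and> (\<exists>l1 l2. a *v v = l1 *s v \<and> b *v v = l2 *s v))"

definition matP :: "complex^2^2" where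
  "matP = mat2 1 1 0 1"

definition matD :: "complex \<Rightarrow> complex^2^2" where
  "matD l = mat2 l 0 0 (inverse l)"

definition uplus :: "complex \<Rightarrow> complex \<Rightarrow> complex^2^2" where
  "uplus \<kappa> \<xi> = mat2 \<kappa> \<xi> 0 (inverse \<kappa>)"

definition uminus2 :: "complex \<Rightarrow> complex \<Rightarrow> complex^2^2" where
  "uminus2 \<kappa> \<xi> = mat2 \<kappa> 0 \<xi> (inverse \<kappa>)"

definition hdelta :: "complex \<Rightarrow> complex \<Rightarrow> complex \<Rightarrow> complex" where
  "hdelta l t1 t2 = (l + inverse l) * t1 * t2 - t1^2 - t2^2 - (l - inverse l)^2"

definition matH :: "complex \<Rightarrow> complex \<Rightarrow> complex \<Rightarrow> complex \<Rightarrow> complex^2^2" where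
  "matH l t1 t2 \<mu> = (let s = inverse (l - inverse l) in
     mat2 (s * (l * t1 - t2)) (s * \<mu>) (s * (hdelta l t1 t2 * inverse \<mu>)) (s * (t2 - inverse l * t1)))"

definition matK :: "complex \<Rightarrow> complex \<Rightarrow> complex \<Rightarrow> complex^2^2" where
  "matK t1 t2 \<alpha> = mat2 (\<alpha> + t1 / 2) (inverse (t1 + t2) * (t1^2 / 4 - 1 - \<alpha>^2))
                        (t1 + t2) (- \<alpha> + t1 / 2)"

end

theory Submission imports Defs begin

lemma mat2_nth: "mat2 a b c d $ 1 $ 1 = a" "mat2 a b c d $ 1 $ 2 = b"
  "mat2 a b c d $ 2 $ 1 = c" "mat2 a b c d $ 2 $ 2 = d"
  by (simp_all add: mat2_def)

lemma mat2_eta: "(x::complex^2^2) = mat2 (x$1$1) (x$1$2) (x$2$1) (x$2$2)"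
  unfolding mat2_def by (simp add: vec_eq_iff forall_2)

lemma mat2_eq: "mat2 a b c d = mat2 a' b' c' d' \<longleftrightarrow> a = a' \<and> b = b' \<and> c = c' \<and> d = d'"
  by (metis mat2_nth)

lemma mat2_mult: "mat2 a b c d ** mat2 e f g h = mat2 (a*e+b*g) (a*f+b*h) (c*e+d*g) (c*f+d*h)"
  unfolding matrix_matrix_mult_def by (simp add: vec_eq_iff forall_2 sum_2 mat2_nth mat2_def)

lemma mat2_det: "det (mat2 a b c d) = a*d - b*c"
  by (simp add: det_2 mat2_nth)

lemma mat2_trace: "trace (mat2 a b c d) = a + d"
  by (simp add: trace_def sum_2 mat2_nth)

lemma mat2_neg: "- mat2 a b c d = mat2 (-a) (-b) (-c) (-d)"
  by (simp add: mat2_def vec_eq_iff forall_2)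

lemma mat2_mulv: "mat2 a b c d *v (v::complex^2) = (\<chi> i. if i = 1 then a * v$1 + b * v$2 else c * v$1 + d * v$2)"
  unfolding matrix_vector_mult_def by (simp add: vec_eq_iff forall_2 sum_2 mat2_nth mat2_def)

lemma vec2_eq: "(v::complex^2) = w \<longleftrightarrow> v$1 = w$1 \<and> v$2 = w$2"
  by (simp add: vec_eq_iff forall_2)

lemma ev_iff: "mat2 a b c d *v (v::complex^2) = l *s v \<longleftrightarrow> a * v$1 + b * v$2 = l * v$1 \<and> c * v$1 + d * v$2 = l * v$2"
  by (simp add: mat2_mulv vec2_eq)


lemma id_test:
  fixes a b c d e f g h :: complex
  assumes "a*d-b*c = 1" "e*h-f*g=1"
  shows "(a*e+b*g + c*f+d*h)^2 - (a+d)*(e+h)*(a*e+b*g + c*f+d*h) + (a+d)^2+(e+h)^2-4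
     = ((b*g - f*c)*(b*g-f*c) + (a*f+b*h-e*b-f*d)*(c*e+d*g-g*a-h*c))"
  using assms by algebra


lemma ev_scalar:
  fixes a b c d x1 x2 :: complex
  assumes "x1 \<noteq> 0 \<or> x2 \<noteq> 0"
  shows "(\<exists>l. a*x1 + b*x2 = l*x1 \<and> c*x1 + d*x2 = l*x2) \<longleftrightarrow> x1*(c*x1+d*x2) = x2*(a*x1+b*x2)"
proof
  assume "\<exists>l. a*x1 + b*x2 = l*x1 \<and> c*x1 + d*x2 = l*x2"
  then obtain l where "a*x1 + b*x2 = l*x1" "c*x1 + d*x2 = l*x2" by blast
  then show "x1*(c*x1+d*x2) = x2*(a*x1+b*x2)" by simp
next
  assume h: "x1*(c*x1+d*x2) = x2*(a*x1+b*x2)"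
  show "\<exists>l. a*x1 + b*x2 = l*x1 \<and> c*x1 + d*x2 = l*x2"
  proof (cases "x1 = 0")
    case True
    then have "x2 \<noteq> 0" using assms by simp
    then show ?thesis using True h
      by (intro exI[of _ "(c*x1+d*x2)/x2"]) (simp add: field_simps)
  next
    case False
    then show ?thesis using h
      by (intro exI[of _ "(a*x1+b*x2)/x1"]) (auto simp add: field_simps)
  qed
qed

lemma eigvec_exists:
  fixes e f g h :: complex
  shows "\<exists>x1 x2 m. (x1 \<noteq> 0 \<or> x2 \<noteq> 0) \<and> e*x1 + f*x2 = m*x1 \<and> g*x1 + h*x2 = m*x2"
proof (cases "f = 0")
  case True
  show ?thesis apply (rule exI[of _ "0::complex"], rule exI[of _ "1::complex"], rule exI[of _ h]) using True by simp
next
  case False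
  define m where "m = ((e+h) + csqrt ((e+h)^2 - 4*(e*h-f*g)))/2"
  have "(csqrt ((e+h)^2 - 4*(e*h-f*g)))^2 = (e+h)^2 - 4*(e*h-f*g)" by simp
  then have q: "m^2 - (e+h)*m + (e*h-f*g) = 0"
    unfolding m_def by (simp add: power2_eq_square field_simps) algebra
  show ?thesis
    apply (rule exI[of _ f], rule exI[of _ "m-e"], rule exI[of _ m])
    using False q by (auto simp: algebra_simps power2_eq_square)
qed

lemma comm_case:
  fixes a b c d e f g h :: complex
  assumes A1: "b*g - f*c = 0" and A2: "a*f+b*h-e*b-f*d = 0" and A3: "c*e+d*g-g*a-h*c = 0"
  shows "\<exists>x1 x2. (x1 \<noteq> 0 \<or> x2 \<noteq> 0) \<and> (\<exists>l1. a * x1 + b * x2 = l1 * x1 \<and> c * x1 + d * x2 = l1 * x2)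
     \<and> (\<exists>l2. e * x1 + f * x2 = l2 * x1 \<and> g * x1 + h * x2 = l2 * x2)"
proof -
  have lin: ?thesis if "e = al*a+be" "f = al*b" "g = al*c" "h = al*d+be" for al be
  proof -
    obtain x1 x2 m where X: "(x1 \<noteq> 0 \<or> x2 \<noteq> 0)" "a * x1 + b * x2 = m * x1" "c * x1 + d * x2 = m * x2"
      using eigvec_exists[of a b c d] by blast
    have "e * x1 + f * x2 = al*(a * x1 + b * x2) + be*x1" "g * x1 + h * x2 = al*(c * x1 + d * x2) + be*x2"
      using that by (simp_all add: algebra_simps)
    then have "e * x1 + f * x2 = (al*m+be) * x1" "g * x1 + h * x2 = (al*m+be) * x2"
      using X by (simp_all add: algebra_simps)
    with X show ?thesis by blast
  qed
  consider "b \<noteq> 0" | "c \<noteq> 0" | "b = 0" "c = 0" "a \<noteq> d" | "b = 0" "c = 0" "a = d" by blast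
  then show ?thesis
  proof cases
    case 1
    have g: "g = f/b*c" using 1 A1 by (simp add: field_simps)
    have h: "h = f/b*d + (e - f/b*a)"
    proof -
      have "b*h = f*d + b*e - f*a" using A2 by (simp add: algebra_simps)
      then show ?thesis using 1 by (simp add: field_simps)
    qed
    show ?thesis
      by (rule lin[of "f/b" "e - f/b*a"]) (use 1 g h in simp_all)
  next
    case 2
    have f: "f = g/c*b" using 2 A1 by (simp add: field_simps)
    have h: "h = g/c*d + (e - g/c*a)"
    proof -
      have "c*h = c*e + d*g - g*a" using A3 by (simp add: algebra_simps)
      then show ?thesis using 2 by (simp add: field_simps)
    qed
    show ?thesis
      by (rule lin[of "g/c" "e - g/c*a"]) (use 2 f h in simp_all)
  next
    case 3
    have "f*(a-d) = 0" using 3 A2 by (simp add: algebra_simps)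
    then have f0: "f = 0" using 3 by simp
    have "g*(d-a) = 0" using 3 A3 by (simp add: algebra_simps)
    then have g0: "g = 0" using 3 by simp
    show ?thesis
      apply (rule exI[of _ "1::complex"], rule exI[of _ "0::complex"])
      using 3 f0 g0 by simp
  next
    case 4
    obtain x1 x2 m where "(x1 \<noteq> 0 \<or> x2 \<noteq> 0)" "e * x1 + f * x2 = m * x1" "g * x1 + h * x2 = m * x2"
      using eigvec_exists[of e f g h] by blast
    moreover have "a * x1 + b * x2 = a * x1" "c * x1 + d * x2 = a * x2" using 4 by simp_all
    ultimately show ?thesis by blast
  qed
qed

lemma red_scalar:
  fixes a b c d e f g h :: complex
  defines "n1 \<equiv> b*g - f*c" and "n2 \<equiv> a*f+b*h-e*b-f*d" and "n3 \<equiv> c*e+d*g-g*a-h*c"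
  shows "(\<exists>x1 x2. (x1 \<noteq> 0 \<or> x2 \<noteq> 0) \<and> (\<exists>l1. a * x1 + b * x2 = l1 * x1 \<and> c * x1 + d * x2 = l1 * x2)
     \<and> (\<exists>l2. e * x1 + f * x2 = l2 * x1 \<and> g * x1 + h * x2 = l2 * x2)) \<longleftrightarrow> n1*n1 + n2*n3 = 0"
proof
  assume "\<exists>x1 x2. (x1 \<noteq> 0 \<or> x2 \<noteq> 0) \<and> (\<exists>l1. a * x1 + b * x2 = l1 * x1 \<and> c * x1 + d * x2 = l1 * x2)
     \<and> (\<exists>l2. e * x1 + f * x2 = l2 * x1 \<and> g * x1 + h * x2 = l2 * x2)"
  then obtain x1 x2 l1 l2 where X: "x1 \<noteq> 0 \<or> x2 \<noteq> 0" and E: "a * x1 + b * x2 = l1 * x1" "c * x1 + d * x2 = l1 * x2"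
     "e * x1 + f * x2 = l2 * x1" "g * x1 + h * x2 = l2 * x2" by blast
  have N1: "n1 * x1 + n2 * x2 = 0" unfolding n1_def n2_def using E by algebra
  have N2: "n3 * x1 - n1 * x2 = 0" unfolding n1_def n3_def using E by algebra
  have "(n1*n1 + n2*n3) * x1 = 0" using N1 N2 by algebra
  moreover have "(n1*n1 + n2*n3) * x2 = 0" using N1 N2 by algebra
  ultimately show "n1*n1 + n2*n3 = 0" using X by auto
next
  assume D: "n1*n1 + n2*n3 = 0"
  have T: "a*n1 + b*n3 + c*n2 - d*n1 = 0" unfolding n1_def n2_def n3_def by algebra
  have T2: "e*n1 + f*n3 + g*n2 - h*n1 = 0" unfolding n1_def n2_def n3_def by algebra
  show "\<exists>x1 x2. (x1 \<noteq> 0 \<or> x2 \<noteq> 0) \<and> (\<exists>l1. a * x1 + b * x2 = l1 * x1 \<and> c * x1 + d * x2 = l1 * x2)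
     \<and> (\<exists>l2. e * x1 + f * x2 = l2 * x1 \<and> g * x1 + h * x2 = l2 * x2)"
  proof (cases "n2 = 0")
    case False
    have "n2 * (n2*(c*n2 - d*n1) - (-n1)*(a*n2 + b*(-n1))) = 0" using D T by algebra
    then have "n2*(c*n2 - d*n1) - (-n1)*(a*n2 + b*(-n1)) = 0" using False by (simp only: mult_eq_0_iff) simp
    then have 1: "n2*(c*n2 - d*n1) = (-n1)*(a*n2 + b*(-n1))" by algebra
    have "n2 * (n2*(g*n2 - h*n1) - (-n1)*(e*n2 + f*(-n1))) = 0" using D T2 by algebra
    then have "n2*(g*n2 - h*n1) - (-n1)*(e*n2 + f*(-n1)) = 0" using False by (simp only: mult_eq_0_iff) simp
    then have 2: "n2*(g*n2 - h*n1) = (-n1)*(e*n2 + f*(-n1))" by algebra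
    have "\<exists>l1. a * n2 + b * (-n1) = l1 * n2 \<and> c * n2 + d * (-n1) = l1 * (-n1)"
      using ev_scalar[of n2 "-n1" a b c d] False 1 by (simp add: algebra_simps)
    moreover have "\<exists>l2. e * n2 + f * (-n1) = l2 * n2 \<and> g * n2 + h * (-n1) = l2 * (-n1)"
      using ev_scalar[of n2 "-n1" e f g h] False 2 by (simp add: algebra_simps)
    ultimately show ?thesis using False by blast
  next
    case True
    then have n1: "n1 = 0" using D by simp
    show ?thesis
    proof (cases "n3 = 0")
      case True
      then show ?thesis using comm_case[of b g f c a h e d] n1 \<open>n2 = 0\<close>
        unfolding n1_def n2_def n3_def by simp
    next
      case False
      have "b = 0" using T n1 \<open>n2 = 0\<close> False by simp
      moreover have "f = 0" using T2 n1 \<open>n2 = 0\<close> False by simp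
      ultimately have "a * 0 + b * 1 = 0 * 0 \<and> c * 0 + d * 1 = d * 1"
          "e * 0 + f * 1 = 0 * 0 \<and> g * 0 + h * 1 = h * 1" by simp_all
      then have "(0::complex) \<noteq> 0 \<or> (1::complex) \<noteq> 0" "(\<exists>l1. a * 0 + b * 1 = l1 * 0 \<and> c * 0 + d * 1 = l1 * 1)"
          "(\<exists>l2. e * 0 + f * 1 = l2 * 0 \<and> g * 0 + h * 1 = l2 * 1)" by auto
      then show ?thesis by blast
    qed
  qed
qed

lemma inv_eqs:
  fixes a b c d e f g h p q r w :: complex
  assumes "a*d-b*c = 1" "a*e+b*g = p" "a*f+b*h = q" "c*e+d*g = r" "c*f+d*h = w"
  shows "e = d*p - b*r" "f = d*q - b*w" "g = a*r - c*p" "h = a*w - c*q"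
  using assms by algebra+

lemma root_cases:
  fixes x k t :: complex
  assumes "k \<noteq> 0" "t = k + inverse k" "x*x - t*x + 1 = 0"
  shows "x = k \<or> x = inverse k"
proof -
  have "(x - k)*(x - inverse k) = x*x - t*x + k * inverse k" using assms(2) by (simp add: algebra_simps)
  also have "\<dots> = 0" using assms by simp
  finally show ?thesis by simp
qed

lemma diag_common:
  fixes a b c d e f g h l t1 t2 :: complex
  assumes dA: "a*d-b*c = 1" and dB: "e*h-f*g = 1" and tA: "a+d = t1" and tB: "e+h = t2"
    and E: "a*e+b*g = l" "a*f+b*h = 0" "c*e+d*g = 0" "c*f+d*h = inverse l"
    and l1: "l \<noteq> 1" and l2: "l \<noteq> -1"
  shows "l \<noteq> 0" "e = d*l" "f = -b*inverse l" "g = -c*l" "h = a*inverse l"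
    "l - inverse l \<noteq> 0" "a*(l - inverse l) = l*t1 - t2" "d*(l - inverse l) = t2 - inverse l * t1"
proof -
  note I = inv_eqs[OF dA E]
  show e: "e = d*l" "f = -b*inverse l" "g = -c*l" "h = a*inverse l" using I by simp_all
  have "(a*e+b*g)*(c*f+d*h) - (a*f+b*h)*(c*e+d*g) = (a*d-b*c)*(e*h-f*g)" by algebra
  then have "l * inverse l = 1" using dA dB E by simp
  then have "l * inverse l \<noteq> 0" by simp
  then show l0: "l \<noteq> 0" by auto
  show s0: "l - inverse l \<noteq> 0"
  proof
    assume "l - inverse l = 0"
    then have "l*l = 1" using l0 by (simp add: field_simps)
    then have "(l-1)*(l+1) = 0" by (simp add: algebra_simps)
    then show False using l1 l2 by (auto simp add: add_eq_0_iff equation_minus_iff)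
  qed
  have "t2 = d*l + a*inverse l" using tB e by simp
  then show "a*(l - inverse l) = l*t1 - t2" using tA[symmetric] l0 by (simp add: algebra_simps)
  show "d*(l - inverse l) = t2 - inverse l * t1" using \<open>t2 = d*l + a*inverse l\<close> tA[symmetric] l0
    by (simp add: algebra_simps)
qed

lemma hdelta_sym: "hdelta l t1 t2 = hdelta l t2 t1"
  unfolding hdelta_def by (simp add: algebra_simps)

lemma hdelta_alt: "l \<noteq> 0 \<Longrightarrow> hdelta l t1 t2 = (l*t1 - t2)*(t2 - inverse l * t1) - (l - inverse l)*(l - inverse l)"
  unfolding hdelta_def by (simp add: algebra_simps power2_eq_square)

lemma part_a:
  fixes a b c d e f g h l t1 t2 \<kappa>1 \<kappa>2 :: complex
  assumes k1: "\<kappa>1 \<noteq> 0" and k2: "\<kappa>2 \<noteq> 0"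
    and t1: "t1 = \<kappa>1 + inverse \<kappa>1" and t2: "t2 = \<kappa>2 + inverse \<kappa>2"
    and dA: "a*d-b*c = 1" and dB: "e*h-f*g = 1" and tA: "a+d = t1" and tB: "e+h = t2"
    and E: "a*e+b*g = l" "a*f+b*h = 0" "c*e+d*g = 0" "c*f+d*h = inverse l"
    and L: "l \<notin> {1, -1, \<kappa>1 * \<kappa>2, \<kappa>1 * inverse \<kappa>2, inverse \<kappa>1 * \<kappa>2, inverse \<kappa>1 * inverse \<kappa>2}"
  shows "\<exists>\<mu>. \<mu> \<noteq> 0 \<and> mat2 a b c d = matH l t1 t2 (- l * \<mu>) \<and> mat2 e f g h = matH l t2 t1 \<mu>"
proof -
  have l1: "l \<noteq> 1" and l2: "l \<noteq> -1" using L by auto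
  note DC = diag_common[OF dA dB tA tB E l1 l2]
  define z where "z = l - inverse l"
  have l0: "l \<noteq> 0" and ee: "e = d*l" and ff: "f = -b*inverse l" and gg: "g = -c*l" and hh: "h = a*inverse l"
    and s0: "z \<noteq> 0" and aS: "a*z = l*t1 - t2" and dS: "d*z = t2 - inverse l * t1"
    using DC unfolding z_def by auto
  have b0: "b \<noteq> 0"
  proof
    assume b: "b = 0"
    then have ad: "a*d = 1" using dA by simp
    have "a*a - t1*a + 1 = 0" using ad tA[symmetric] by (simp add: algebra_simps)
    then have A: "a = \<kappa>1 \<or> a = inverse \<kappa>1" using root_cases[OF k1 t1] by blast
    have f0: "f = 0" using ff b by simp
    then have eh: "e*h = 1" using dB by simp
    have "e*e - t2*e + 1 = 0" using eh tB[symmetric] by (simp add: algebra_simps)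
    then have B: "e = \<kappa>2 \<or> e = inverse \<kappa>2" using root_cases[OF k2 t2] by blast
    have "e*a = l" using ee ad by (simp add: algebra_simps)
    then show False using A B L by (auto simp: ac_simps)
  qed
  define \<mu> where "\<mu> = f*z"
  have bl: "-l*f = b" using ff l0 by simp
  have m0: "\<mu> \<noteq> 0" unfolding \<mu>_def using b0 bl s0 by auto
  have lm: "- l * \<mu> = b*z" unfolding \<mu>_def using bl by (metis mult.assoc)
  have hd: "hdelta l t1 t2 = b*c*z*z"
  proof -
    have "hdelta l t1 t2 = (a*z)*(d*z) - z*z" unfolding hdelta_alt[OF l0] z_def[symmetric] aS[symmetric] dS[symmetric] by simp
    also have "\<dots> = (a*d-1)*z*z" by (simp add: algebra_simps)
    also have "\<dots> = b*c*z*z" using dA by (simp add: algebra_simps)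
    finally show ?thesis .
  qed
  have f0: "f \<noteq> 0" using b0 bl by auto
  have X1: "l * (t2 - inverse l*t1) = l*t2 - t1" using l0 by (simp add: algebra_simps)
  have X2: "inverse l * (l*t1 - t2) = t1 - inverse l * t2" using l0 by (simp add: algebra_simps)
  have A1: "mat2 a b c d = matH l t1 t2 (- l * \<mu>)"
    unfolding lm matH_def Let_def mat2_eq z_def[symmetric] hd
  proof (intro conjI)
    show "a = inverse z * (l * t1 - t2)" unfolding aS[symmetric] using s0 by simp
    show "b = inverse z * (b * z)" using s0 by simp
    show "c = inverse z * (b * c * z * z * inverse (b * z))" using s0 b0 by (simp add: field_simps)
    show "d = inverse z * (t2 - inverse l * t1)" unfolding dS[symmetric] using s0 by simp
  qed
  have A2: "mat2 e f g h = matH l t2 t1 \<mu>"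
    unfolding matH_def Let_def mat2_eq z_def[symmetric] hdelta_sym[of l t2 t1] hd \<mu>_def
  proof (intro conjI)
    show "e = inverse z * (l * t2 - t1)" unfolding X1[symmetric] dS[symmetric] ee using s0 by simp
    show "f = inverse z * (f * z)" using s0 by simp
    show "g = inverse z * (b * c * z * z * inverse (f * z))" unfolding gg bl[symmetric] using s0 f0 l0
      by (simp add: field_simps)
    show "h = inverse z * (t1 - inverse l * t2)" unfolding X2[symmetric] aS[symmetric] hh using s0 by simp
  qed
  show ?thesis using m0 A1 A2 by blast
qed

lemma part_b:
  fixes a b c d e f g h l t1 t2 k1 k2 :: complex
  assumes k1: "k1 \<noteq> 0" and k2: "k2 \<noteq> 0"
    and t1: "t1 = k1 + inverse k1" and t2: "t2 = k2 + inverse k2"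
    and dA: "a*d-b*c = 1" and dB: "e*h-f*g = 1" and tA: "a+d = t1" and tB: "e+h = t2"
    and E: "a*e+b*g = k1*k2" "a*f+b*h = 0" "c*e+d*g = 0" "c*f+d*h = inverse (k1*k2)"
    and l1: "k1*k2 \<noteq> 1" and l2: "k1*k2 \<noteq> -1"
  shows "(\<exists>\<alpha>. mat2 a b c d = uplus k1 (- k1 * \<alpha>) \<and> mat2 e f g h = uplus k2 (inverse k2 * \<alpha>))
       \<or> (\<exists>\<alpha>. mat2 a b c d = uminus2 k1 (- (inverse k1) * \<alpha>) \<and> mat2 e f g h = uminus2 k2 (k2 * \<alpha>))"
proof -
  note DC = diag_common[OF dA dB tA tB E l1 l2]
  define z where "z = k1*k2 - inverse (k1*k2)"
  have ee: "e = d*(k1*k2)" and ff: "f = -b*inverse (k1*k2)" and gg: "g = -c*(k1*k2)" and hh: "h = a*inverse (k1*k2)"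
    and s0: "z \<noteq> 0" and aS: "a*z = (k1*k2)*t1 - t2"
    using DC unfolding z_def by auto
  have "(k1*k2)*t1 - t2 = k1 * z" unfolding t1 t2 z_def using k1 k2 by (simp add: field_simps)
  then have a: "a = k1" using aS s0 by simp
  have d: "d = inverse k1" using tA t1 a by simp
  have bc: "b*c = 0" using dA a d k1 by simp
  have e: "e = k2" using ee d k1 by (simp add: field_simps)
  have h: "h = inverse k2" using hh a k1 by (simp add: field_simps)
  show ?thesis
  proof (cases "c = 0")
    case True
    have "mat2 a b c d = uplus k1 (- k1 * (-b/k1)) \<and> mat2 e f g h = uplus k2 (inverse k2 * (-b/k1))"
      unfolding uplus_def mat2_eq using True a d e h ff gg k1 k2 by (simp add: field_simps)
    then show ?thesis by blast
  next
    case False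
    then have b: "b = 0" using bc by simp
    have "mat2 a b c d = uminus2 k1 (- (inverse k1) * (-c*k1)) \<and> mat2 e f g h = uminus2 k2 (k2 * (-c*k1))"
      unfolding uminus2_def mat2_eq using b a d e h ff gg k1 k2 by (simp add: field_simps)
    then show ?thesis by blast
  qed
qed

lemma part_cd_common:
  fixes a b c d e f g h t1 t2 :: complex
  assumes dA: "a*d-b*c = 1" and tA: "a+d = t1" and tB: "e+h = t2"
    and E: "a*e+b*g = -1" "a*f+b*h = -1" "c*e+d*g = 0" "c*f+d*h = -1"
  shows "e = -d" "f = b - d" "g = c" "h = c - a" "c = t1 + t2"
proof -
  note I = inv_eqs[OF dA E]
  show "e = -d" "f = b - d" "g = c" "h = c - a" using I by (simp_all add: algebra_simps)
  then have "t2 = -d + (c - a)" using tB by simp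
  then show "c = t1 + t2" using tA by (simp add: algebra_simps)
qed

lemma part_c:
  fixes a b c d e f g h t1 t2 \<kappa>2 :: complex
  assumes k2: "\<kappa>2 \<noteq> 0" and t2: "t2 = \<kappa>2 + inverse \<kappa>2"
    and dA: "a*d-b*c = 1" and dB: "e*h-f*g = 1" and tA: "a+d = t1" and tB: "e+h = t2"
    and E: "a*e+b*g = -1" "a*f+b*h = -1" "c*e+d*g = 0" "c*f+d*h = -1"
    and s: "t1 + t2 = 0"
  shows "\<exists>\<xi> (\<epsilon>::int). \<epsilon> \<in> {1, -1} \<and>
              mat2 a b c d = uplus (- (\<kappa>2 powi (- \<epsilon>))) \<xi> \<and> mat2 e f g h = uplus (\<kappa>2 powi \<epsilon>) (\<xi> + \<kappa>2 powi \<epsilon>)"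
proof -
  note C = part_cd_common[OF dA tA tB E]
  have c0: "c = 0" using C s by simp
  have eh: "e*h = 1" using dB C c0 by simp
  have "e*e - t2*e + 1 = 0" using eh tB[symmetric] by (simp add: algebra_simps)
  then have B: "e = \<kappa>2 \<or> e = inverse \<kappa>2" using root_cases[OF k2 t2] by blast
  have "e*(-a) = 1" using eh C c0 by simp
  then have "inverse e = -a" by (rule inverse_unique)
  then have ad: "a = - inverse e" by simp
  have dd: "d = - e" using C by simp
  have e0: "e \<noteq> 0" using eh by auto
  from B show ?thesis
  proof
    assume eq: "e = \<kappa>2"
    have "mat2 a b c d = uplus (- (\<kappa>2 powi (- 1))) b \<and> mat2 e f g h = uplus (\<kappa>2 powi 1) (b + \<kappa>2 powi 1)"
      unfolding uplus_def mat2_eq using eq ad dd c0 C(2,3,4) e0 by (simp add: power_int_minus)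
    note M = this
    show ?thesis apply (rule exI[of _ b], rule exI[of _ "1::int"]) using M by simp
  next
    assume eq: "e = inverse \<kappa>2"
    have "mat2 a b c d = uplus (- (\<kappa>2 powi (- (-1)))) b \<and> mat2 e f g h = uplus (\<kappa>2 powi (-1)) (b + \<kappa>2 powi (-1))"
      unfolding uplus_def mat2_eq using eq ad dd c0 C(2,3,4) e0 by (simp add: power_int_minus)
    note M = this
    show ?thesis apply (rule exI[of _ b], rule exI[of _ "-1::int"]) using M by simp
  qed
qed

lemma part_d:
  fixes a b c d e f g h t1 t2 :: complex
  assumes dA: "a*d-b*c = 1" and tA: "a+d = t1" and tB: "e+h = t2"
    and E: "a*e+b*g = -1" "a*f+b*h = -1" "c*e+d*g = 0" "c*f+d*h = -1"
    and s: "t1 + t2 \<noteq> 0"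
  shows "\<exists>\<alpha>. mat2 a b c d = matK t1 t2 (\<alpha> + (t1 + t2) / 2) \<and> mat2 e f g h = matK t2 t1 \<alpha>"
proof -
  note C = part_cd_common[OF dA tA tB E]
  have aa: "a = t1 - d" using tA[symmetric] by simp
  have cc: "c = t1 + t2" using C by simp
  have bb: "b = ((t1-d)*d - 1) / (t1+t2)" using dA aa cc s by (simp add: field_simps)
  have ee: "e = -d" and ff: "f = b - d" and gg: "g = t1 + t2" and hh: "h = t2 + d"
    using C aa cc by (simp_all add: algebra_simps)
  have Q1: "t1^2/4 - 1 - ((-d - t2/2) + (t1 + t2) / 2)^2 = (t1-d)*d - 1"
    by (simp add: field_simps power2_eq_square)
  have Q2: "t2^2/4 - 1 - (-d - t2/2)^2 = -d*d - d*t2 - 1"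
    by (simp add: field_simps power2_eq_square)
  have "mat2 a b c d = matK t1 t2 ((-d - t2/2) + (t1 + t2) / 2) \<and> mat2 e f g h = matK t2 t1 (-d - t2/2)"
    unfolding matK_def mat2_eq Q1 Q2
  proof (intro conjI)
    show "b = inverse (t1 + t2) * ((t1 - d) * d - 1)" using bb by (simp add: divide_inverse)
    show "f = inverse (t2 + t1) * (- d * d - d * t2 - 1)" unfolding ff bb using s
      by (simp add: field_simps)
  qed (simp_all add: aa cc ee gg hh field_simps)
  then show ?thesis by blast
qed

lemma red_iff:
  "reducible_pair (mat2 a b c d) (mat2 e f g h) \<longleftrightarrow>
   (\<exists>x1 x2. (x1 \<noteq> 0 \<or> x2 \<noteq> 0) \<and> (\<exists>l1. a * x1 + b * x2 = l1 * x1 \<and> c * x1 + d * x2 = l1 * x2)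
     \<and> (\<exists>l2. e * x1 + f * x2 = l2 * x1 \<and> g * x1 + h * x2 = l2 * x2))"
proof
  assume "reducible_pair (mat2 a b c d) (mat2 e f g h)"
  then obtain v :: "complex^2" and l1 l2 where "v \<noteq> 0" "mat2 a b c d *v v = l1 *s v" "mat2 e f g h *v v = l2 *s v"
    unfolding reducible_pair_def by blast
  moreover have "v$1 \<noteq> 0 \<or> v$2 \<noteq> 0" using \<open>v \<noteq> 0\<close> by (auto simp: vec2_eq)
  ultimately show "\<exists>x1 x2. (x1 \<noteq> 0 \<or> x2 \<noteq> 0) \<and> (\<exists>l1. a * x1 + b * x2 = l1 * x1 \<and> c * x1 + d * x2 = l1 * x2)
     \<and> (\<exists>l2. e * x1 + f * x2 = l2 * x1 \<and> g * x1 + h * x2 = l2 * x2)"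
    unfolding ev_iff by blast
next
  assume "\<exists>x1 x2. (x1 \<noteq> 0 \<or> x2 \<noteq> 0) \<and> (\<exists>l1. a * x1 + b * x2 = l1 * x1 \<and> c * x1 + d * x2 = l1 * x2)
     \<and> (\<exists>l2. e * x1 + f * x2 = l2 * x1 \<and> g * x1 + h * x2 = l2 * x2)"
  then obtain x1 x2 l1 l2 where X: "x1 \<noteq> 0 \<or> x2 \<noteq> 0" "a * x1 + b * x2 = l1 * x1" "c * x1 + d * x2 = l1 * x2"
     "e * x1 + f * x2 = l2 * x1" "g * x1 + h * x2 = l2 * x2" by blast
  define v :: "complex^2" where "v = (\<chi> i. if i = 1 then x1 else x2)"
  have v1: "v$1 = x1" and v2: "v$2 = x2" unfolding v_def by simp_all
  have "v \<noteq> 0" using X(1) v1 v2 by auto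
  moreover have "mat2 a b c d *v v = l1 *s v" "mat2 e f g h *v v = l2 *s v"
    unfolding ev_iff v1 v2 using X by simp_all
  ultimately show "reducible_pair (mat2 a b c d) (mat2 e f g h)"
    unfolding reducible_pair_def by blast
qed

lemma powi_pm:
  fixes \<kappa> :: complex and \<epsilon> :: int
  assumes "\<epsilon> \<in> {1, -1}" "\<kappa> \<noteq> 0"
  shows "\<kappa> powi \<epsilon> \<noteq> 0" "\<kappa> + inverse \<kappa> = \<kappa> powi \<epsilon> + inverse (\<kappa> powi \<epsilon>)"
    "\<kappa> powi (-\<epsilon>) = inverse (\<kappa> powi \<epsilon>)"
  using assms by (auto simp: power_int_minus)

theorem mainTheorem3:
  fixes a1 a2 :: "complex^2^2" and \<kappa>1 \<kappa>2 t1 t2 :: complex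
  assumes k1: "\<kappa>1 \<noteq> 0" and k2: "\<kappa>2 \<noteq> 0"
    and t1: "t1 = \<kappa>1 + inverse \<kappa>1" and t2: "t2 = \<kappa>2 + inverse \<kappa>2"
    and a1: "a1 \<in> SL2_tr t1" and a2: "a2 \<in> SL2_tr t2"
  shows
    "(\<forall>l. a1 ** a2 = matD l \<and>
          l \<notin> {1, -1, \<kappa>1 * \<kappa>2, \<kappa>1 * inverse \<kappa>2, inverse \<kappa>1 * \<kappa>2, inverse \<kappa>1 * inverse \<kappa>2}
        \<longrightarrow> (\<exists>\<mu>. \<mu> \<noteq> 0 \<and> a1 = matH l t1 t2 (- l * \<mu>) \<and> a2 = matH l t2 t1 \<mu>))
   \<and> (\<forall>\<epsilon>1 \<epsilon>2 :: int. \<epsilon>1 \<in> {1, -1} \<and> \<epsilon>2 \<in> {1, -1} \<and>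
          a1 ** a2 = matD (\<kappa>1 powi \<epsilon>1 * \<kappa>2 powi \<epsilon>2) \<and>
          \<kappa>1 powi \<epsilon>1 * \<kappa>2 powi \<epsilon>2 \<noteq> 1 \<and> \<kappa>1 powi \<epsilon>1 * \<kappa>2 powi \<epsilon>2 \<noteq> -1
        \<longrightarrow> (\<exists>\<alpha>. a1 = uplus (\<kappa>1 powi \<epsilon>1) (- (\<kappa>1 powi \<epsilon>1) * \<alpha>) \<and>
                  a2 = uplus (\<kappa>2 powi \<epsilon>2) (\<kappa>2 powi (- \<epsilon>2) * \<alpha>))
          \<or> (\<exists>\<alpha>. a1 = uminus2 (\<kappa>1 powi \<epsilon>1) (- (\<kappa>1 powi (- \<epsilon>1)) * \<alpha>) \<and>
                  a2 = uminus2 (\<kappa>2 powi \<epsilon>2) (\<kappa>2 powi \<epsilon>2 * \<alpha>)))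
   \<and> (a1 ** a2 = - matP \<and> t1 + t2 = 0
        \<longrightarrow> (\<exists>\<xi> (\<epsilon>::int). \<epsilon> \<in> {1, -1} \<and>
              a1 = uplus (- (\<kappa>2 powi (- \<epsilon>))) \<xi> \<and> a2 = uplus (\<kappa>2 powi \<epsilon>) (\<xi> + \<kappa>2 powi \<epsilon>)))
   \<and> (a1 ** a2 = - matP \<and> t1 + t2 \<noteq> 0
        \<longrightarrow> (\<exists>\<alpha>. a1 = matK t1 t2 (\<alpha> + (t1 + t2) / 2) \<and> a2 = matK t2 t1 \<alpha>))
   \<and> (reducible_pair a1 a2 \<longleftrightarrow>
        (trace (a1 ** a2))^2 - t1 * t2 * trace (a1 ** a2) + t1^2 + t2^2 - 4 = 0)"
proof -
  obtain a b c d where A: "a1 = mat2 a b c d" using mat2_eta by blast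
  obtain e f g h where B: "a2 = mat2 e f g h" using mat2_eta by blast
  have dA: "a*d-b*c = 1" and tA: "a+d = t1" using a1 unfolding A SL2_tr_def SL2_def
    by (simp_all add: mat2_det mat2_trace)
  have dB: "e*h-f*g = 1" and tB: "e+h = t2" using a2 unfolding B SL2_tr_def SL2_def
    by (simp_all add: mat2_det mat2_trace)
  have P: "a1 ** a2 = mat2 (a*e+b*g) (a*f+b*h) (c*e+d*g) (c*f+d*h)" unfolding A B mat2_mult ..
  have PA: "(\<forall>l. a1 ** a2 = matD l \<and>
          l \<notin> {1, -1, \<kappa>1 * \<kappa>2, \<kappa>1 * inverse \<kappa>2, inverse \<kappa>1 * \<kappa>2, inverse \<kappa>1 * inverse \<kappa>2}
        \<longrightarrow> (\<exists>\<mu>. \<mu> \<noteq> 0 \<and> a1 = matH l t1 t2 (- l * \<mu>) \<and> a2 = matH l t2 t1 \<mu>))"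
  proof (intro allI impI)
    fix l
    assume H: "a1 ** a2 = matD l \<and>
          l \<notin> {1, -1, \<kappa>1 * \<kappa>2, \<kappa>1 * inverse \<kappa>2, inverse \<kappa>1 * \<kappa>2, inverse \<kappa>1 * inverse \<kappa>2}"
    then have E: "a*e+b*g = l" "a*f+b*h = 0" "c*e+d*g = 0" "c*f+d*h = inverse l"
      unfolding P matD_def mat2_eq by simp_all
    show "\<exists>\<mu>. \<mu> \<noteq> 0 \<and> a1 = matH l t1 t2 (- l * \<mu>) \<and> a2 = matH l t2 t1 \<mu>"
      unfolding A B using part_a[OF k1 k2 t1 t2 dA dB tA tB E] H by blast
  qed
  have PB: "(\<forall>\<epsilon>1 \<epsilon>2 :: int. \<epsilon>1 \<in> {1, -1} \<and> \<epsilon>2 \<in> {1, -1} \<and>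
          a1 ** a2 = matD (\<kappa>1 powi \<epsilon>1 * \<kappa>2 powi \<epsilon>2) \<and>
          \<kappa>1 powi \<epsilon>1 * \<kappa>2 powi \<epsilon>2 \<noteq> 1 \<and> \<kappa>1 powi \<epsilon>1 * \<kappa>2 powi \<epsilon>2 \<noteq> -1
        \<longrightarrow> (\<exists>\<alpha>. a1 = uplus (\<kappa>1 powi \<epsilon>1) (- (\<kappa>1 powi \<epsilon>1) * \<alpha>) \<and>
                  a2 = uplus (\<kappa>2 powi \<epsilon>2) (\<kappa>2 powi (- \<epsilon>2) * \<alpha>))
          \<or> (\<exists>\<alpha>. a1 = uminus2 (\<kappa>1 powi \<epsilon>1) (- (\<kappa>1 powi (- \<epsilon>1)) * \<alpha>) \<and>
                  a2 = uminus2 (\<kappa>2 powi \<epsilon>2) (\<kappa>2 powi \<epsilon>2 * \<alpha>)))"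
  proof (intro allI impI)
    fix \<epsilon>1 \<epsilon>2 :: int
    assume H: "\<epsilon>1 \<in> {1, -1} \<and> \<epsilon>2 \<in> {1, -1} \<and>
          a1 ** a2 = matD (\<kappa>1 powi \<epsilon>1 * \<kappa>2 powi \<epsilon>2) \<and>
          \<kappa>1 powi \<epsilon>1 * \<kappa>2 powi \<epsilon>2 \<noteq> 1 \<and> \<kappa>1 powi \<epsilon>1 * \<kappa>2 powi \<epsilon>2 \<noteq> -1"
    note p1 = powi_pm[of \<epsilon>1 \<kappa>1] and p2 = powi_pm[of \<epsilon>2 \<kappa>2]
    have q1: "\<kappa>1 powi \<epsilon>1 \<noteq> 0" "t1 = \<kappa>1 powi \<epsilon>1 + inverse (\<kappa>1 powi \<epsilon>1)"
      "\<kappa>1 powi (-\<epsilon>1) = inverse (\<kappa>1 powi \<epsilon>1)" using p1 H k1 t1 by auto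
    have q2: "\<kappa>2 powi \<epsilon>2 \<noteq> 0" "t2 = \<kappa>2 powi \<epsilon>2 + inverse (\<kappa>2 powi \<epsilon>2)"
      "\<kappa>2 powi (-\<epsilon>2) = inverse (\<kappa>2 powi \<epsilon>2)" using p2 H k2 t2 by auto
    have E: "a*e+b*g = \<kappa>1 powi \<epsilon>1 * \<kappa>2 powi \<epsilon>2" "a*f+b*h = 0" "c*e+d*g = 0"
      "c*f+d*h = inverse (\<kappa>1 powi \<epsilon>1 * \<kappa>2 powi \<epsilon>2)"
      using H unfolding P matD_def mat2_eq by simp_all
    have l1: "\<kappa>1 powi \<epsilon>1 * \<kappa>2 powi \<epsilon>2 \<noteq> 1" and l2: "\<kappa>1 powi \<epsilon>1 * \<kappa>2 powi \<epsilon>2 \<noteq> -1" using H by simp_all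
    show "(\<exists>\<alpha>. a1 = uplus (\<kappa>1 powi \<epsilon>1) (- (\<kappa>1 powi \<epsilon>1) * \<alpha>) \<and>
                  a2 = uplus (\<kappa>2 powi \<epsilon>2) (\<kappa>2 powi (- \<epsilon>2) * \<alpha>))
          \<or> (\<exists>\<alpha>. a1 = uminus2 (\<kappa>1 powi \<epsilon>1) (- (\<kappa>1 powi (- \<epsilon>1)) * \<alpha>) \<and>
                  a2 = uminus2 (\<kappa>2 powi \<epsilon>2) (\<kappa>2 powi \<epsilon>2 * \<alpha>))"
      unfolding A B q1(3) q2(3) by (rule part_b[OF q1(1) q2(1) q1(2) q2(2) dA dB tA tB E l1 l2])
  qed
  have mP: "- matP = mat2 (-1) (-1) 0 (-1)" unfolding matP_def mat2_neg by simp
  have PC: "(a1 ** a2 = - matP \<and> t1 + t2 = 0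
        \<longrightarrow> (\<exists>\<xi> (\<epsilon>::int). \<epsilon> \<in> {1, -1} \<and>
              a1 = uplus (- (\<kappa>2 powi (- \<epsilon>))) \<xi> \<and> a2 = uplus (\<kappa>2 powi \<epsilon>) (\<xi> + \<kappa>2 powi \<epsilon>)))"
  proof
    assume H: "a1 ** a2 = - matP \<and> t1 + t2 = 0"
    then have E: "a*e+b*g = -1" "a*f+b*h = -1" "c*e+d*g = 0" "c*f+d*h = -1"
      unfolding P mP mat2_eq by simp_all
    show "\<exists>\<xi> (\<epsilon>::int). \<epsilon> \<in> {1, -1} \<and>
              a1 = uplus (- (\<kappa>2 powi (- \<epsilon>))) \<xi> \<and> a2 = uplus (\<kappa>2 powi \<epsilon>) (\<xi> + \<kappa>2 powi \<epsilon>)"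
      unfolding A B using part_c[OF k2 t2 dA dB tA tB E] H by blast
  qed
  have PD: "(a1 ** a2 = - matP \<and> t1 + t2 \<noteq> 0
        \<longrightarrow> (\<exists>\<alpha>. a1 = matK t1 t2 (\<alpha> + (t1 + t2) / 2) \<and> a2 = matK t2 t1 \<alpha>))"
  proof
    assume H: "a1 ** a2 = - matP \<and> t1 + t2 \<noteq> 0"
    then have E: "a*e+b*g = -1" "a*f+b*h = -1" "c*e+d*g = 0" "c*f+d*h = -1"
      unfolding P mP mat2_eq by simp_all
    show "\<exists>\<alpha>. a1 = matK t1 t2 (\<alpha> + (t1 + t2) / 2) \<and> a2 = matK t2 t1 \<alpha>"
      unfolding A B using part_d[OF dA tA tB E] H by blast
  qed
  have PE: "(reducible_pair a1 a2 \<longleftrightarrow>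
        (trace (a1 ** a2))^2 - t1 * t2 * trace (a1 ** a2) + t1^2 + t2^2 - 4 = 0)"
  proof -
    have tr: "trace (a1 ** a2) = a*e+b*g + c*f+d*h" unfolding P mat2_trace by simp
    show ?thesis unfolding tr tA[symmetric] tB[symmetric] id_test[OF dA dB]
      unfolding A B red_iff red_scalar by simp
  qed
  show ?thesis using PA PB PC PD PE by blast
qed

end
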